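(* Let $M$ be a matroid, let $S,T$ be disjoint subsets of $E(M)$, let $k:=\kappa_M(S,T)$, and let $e\in E(M)-(S\cup T)$ be such that $\kappa_{M/e}(S,T)\neq k$. If $(A,B)$ is a partition of $E(M)$ with $S\subseteq A$, $T\subseteq B$, $\lambda_M(A)=k$, $e\in A$, and $|A|$ minimum among all such partitions, then $e\in\mathrm{cl}_M(A-e)\cap\mathrm{cl}_M(B)$.
   Context: For a matroid $M$ with ground set $E$, $\lambda_M(X):=r_M(X)+r_M(E-X)-r(M)$, and for disjoint $S,T\subseteq E$, $\kappa_M(S,T):=\min\{\lambda_M(X):S\subseteq X\subseteq E-T\}$. $\mathrm{cl}_M$ denotes closure. *)

theory Defs
  imports Main
begin

definition matroid :: "'a set \<Rightarrow> ('a set \<Rightarrow> bool) \<Rightarrow> bool" where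
  "matroid E indep \<longleftrightarrow>
     finite E \<and> (\<forall>I. indep I \<longrightarrow> I \<subseteq> E) \<and> indep {} \<and>
     (\<forall>I J. indep J \<and> I \<subseteq> J \<longrightarrow> indep I) \<and>
     (\<forall>I J. indep I \<and> indep J \<and> card I < card J \<longrightarrow> (\<exists>x\<in>J - I. indep (insert x I)))"

definition rk :: "('a set \<Rightarrow> bool) \<Rightarrow> 'a set \<Rightarrow> nat" where
  "rk indep X = Max {card I | I. I \<subseteq> X \<and> indep I}"

definition lam :: "'a set \<Rightarrow> ('a set \<Rightarrow> bool) \<Rightarrow> 'a set \<Rightarrow> nat" where
  "lam E indep X = rk indep X + rk indep (E - X) - rk indep E"

definition kappa :: "'a set \<Rightarrow> ('a set \<Rightarrow> bool) \<Rightarrow> 'a set \<Rightarrow> 'a set \<Rightarrow> nat" where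
  "kappa E indep S T = Min {lam E indep X | X. S \<subseteq> X \<and> X \<subseteq> E - T}"

definition cl :: "'a set \<Rightarrow> ('a set \<Rightarrow> bool) \<Rightarrow> 'a set \<Rightarrow> 'a set" where
  "cl E indep X = {x \<in> E. rk indep (insert x X) = rk indep X}"

text \<open>Independent sets of the contraction M/e (ground set E - {e}):
  if e is not a loop, I is independent iff I \<union> {e} is independent in M;
  if e is a loop, M/e = M\e.\<close>
definition contract :: "('a set \<Rightarrow> bool) \<Rightarrow> 'a \<Rightarrow> 'a set \<Rightarrow> bool" where
  "contract indep e I \<longleftrightarrow> e \<notin> I \<and> (if indep {e} then indep (insert e I) else indep I)"

end

theory Submission
  imports Defs
begin

lemma kappa_le:
  assumes "finite E'" "S \<subseteq> X" "X \<subseteq> E' - T"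
  shows "kappa E' ind S T \<le> lam E' ind X"
proof -
  have fin: "finite {lam E' ind X |X. S \<subseteq> X \<and> X \<subseteq> E' - T}"
    by (rule finite_subset[of _ "lam E' ind ` Pow E'"]) (use assms in auto)
  show ?thesis unfolding kappa_def by (rule Min_le[OF fin]) (use assms in auto)
qed

lemma kappa_attained:
  assumes "finite E'" "S \<subseteq> E' - T"
  shows "\<exists>X. S \<subseteq> X \<and> X \<subseteq> E' - T \<and> lam E' ind X = kappa E' ind S T"
proof -
  have fin: "finite {lam E' ind X |X. S \<subseteq> X \<and> X \<subseteq> E' - T}"
    by (rule finite_subset[of _ "lam E' ind ` Pow E'"]) (use assms in auto)
  have ne: "{lam E' ind X |X. S \<subseteq> X \<and> X \<subseteq> E' - T} \<noteq> {}" using assms by auto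
  let ?K = "{lam E' ind X |X. S \<subseteq> X \<and> X \<subseteq> E' - T}"
  have "Min ?K \<in> ?K" by (rule Min_in[OF fin ne])
  then obtain X where X: "Min ?K = lam E' ind X" "S \<subseteq> X" "X \<subseteq> E' - T"
    unfolding mem_Collect_eq by blast
  show ?thesis unfolding kappa_def using X by metis
qed

locale mat =
  fixes E :: "'a set" and indep :: "'a set \<Rightarrow> bool"
  assumes M: "matroid E indep"
begin

lemma finE: "finite E" using M unfolding matroid_def by blast
lemma indep_sub: "indep I \<Longrightarrow> I \<subseteq> E" using M unfolding matroid_def by blast
lemma indep_empty: "indep {}" using M unfolding matroid_def by blast
lemma indep_subset: "indep J \<Longrightarrow> I \<subseteq> J \<Longrightarrow> indep I" using M unfolding matroid_def by blast
lemma exch: "indep I \<Longrightarrow> indep J \<Longrightarrow> card I < card J \<Longrightarrow> \<exists>x\<in>J - I. indep (insert x I)"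
  using M unfolding matroid_def by blast
lemma indep_fin: "indep I \<Longrightarrow> finite I" using indep_sub finE finite_subset by blast

lemma rk_fin: "finite {card I |I. I \<subseteq> X \<and> indep I}"
  by (rule finite_subset[of _ "{..card E}"]) (auto intro: card_mono finE dest: indep_sub)

lemma rk_ge: "I \<subseteq> X \<Longrightarrow> indep I \<Longrightarrow> card I \<le> rk indep X"
  unfolding rk_def by (rule Max_ge[OF rk_fin]) auto

lemma rk_basis: "\<exists>I. I \<subseteq> X \<and> indep I \<and> card I = rk indep X"
proof -
  have ne: "{card I |I. I \<subseteq> X \<and> indep I} \<noteq> {}" using indep_empty by auto
  from Max_in[OF rk_fin ne] show ?thesis unfolding rk_def by auto
qed

lemma augment_aux:
  "rk indep Z - card I = n \<Longrightarrow> indep I \<Longrightarrow> I \<subseteq> Z \<Longrightarrow>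
   \<exists>J. I \<subseteq> J \<and> J \<subseteq> Z \<and> indep J \<and> card J = rk indep Z"
proof (induction n arbitrary: I rule: less_induct)
  case (less n)
  have le: "card I \<le> rk indep Z" using rk_ge less.prems(2,3) by blast
  show ?case
  proof (cases "card I = rk indep Z")
    case True then show ?thesis using less.prems by blast
  next
    case False
    obtain B where B: "B \<subseteq> Z" "indep B" "card B = rk indep Z" using rk_basis by blast
    have "card I < card B" using le False B by simp
    then obtain x where x: "x \<in> B - I" "indep (insert x I)" using exch less.prems B by blast
    have fI: "finite I" using indep_fin less.prems by blast
    have c: "card (insert x I) = card I + 1" using x fI by simp
    have "card (insert x I) \<le> rk indep Z" using rk_ge[OF _ x(2), of Z] x B less.prems by blast
    then have lt: "rk indep Z - card (insert x I) < n" using c less.prems(1) by simp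
    have sub: "insert x I \<subseteq> Z" using x B less.prems by blast
    obtain J where J: "insert x I \<subseteq> J" "J \<subseteq> Z" "indep J" "card J = rk indep Z"
      using less.IH[OF lt refl x(2) sub] by blast
    then show ?thesis by blast
  qed
qed

lemma augment: "indep I \<Longrightarrow> I \<subseteq> Z \<Longrightarrow> \<exists>J. I \<subseteq> J \<and> J \<subseteq> Z \<and> indep J \<and> card J = rk indep Z"
  using augment_aux by blast

lemma rk_mono: "X \<subseteq> Y \<Longrightarrow> rk indep X \<le> rk indep Y"
proof -
  assume XY: "X \<subseteq> Y"
  obtain I where I: "I \<subseteq> X" "indep I" "card I = rk indep X" using rk_basis by blast
  have "I \<subseteq> Y" using I(1) XY by (rule order_trans)
  then have "card I \<le> rk indep Y" using I(2) by (rule rk_ge)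
  then show ?thesis using I(3) by simp
qed

lemma rk_submod: "rk indep (X \<union> Y) + rk indep (X \<inter> Y) \<le> rk indep X + rk indep Y"
proof -
  obtain I where I: "I \<subseteq> X \<inter> Y" "indep I" "card I = rk indep (X \<inter> Y)" using rk_basis by blast
  have IXY: "I \<subseteq> X \<union> Y" using I(1) by blast
  obtain J where J: "I \<subseteq> J" "J \<subseteq> X \<union> Y" "indep J" "card J = rk indep (X \<union> Y)"
    using augment[OF I(2) IXY] by blast
  have fJ: "finite J" by (rule indep_fin[OF J(3)])
  have iX: "indep (J \<inter> X)" by (rule indep_subset[OF J(3)]) blast
  have iY: "indep (J \<inter> Y)" by (rule indep_subset[OF J(3)]) blast
  have a: "card (J \<inter> X) \<le> rk indep X" by (rule rk_ge[OF _ iX]) blast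
  have b: "card (J \<inter> Y) \<le> rk indep Y" by (rule rk_ge[OF _ iY]) blast
  have f1: "finite (J \<inter> X)" using fJ by blast
  have f2: "finite (J \<inter> Y)" using fJ by blast
  have cu: "card (J \<inter> X) + card (J \<inter> Y) = card ((J \<inter> X) \<union> (J \<inter> Y)) + card ((J \<inter> X) \<inter> (J \<inter> Y))"
    by (rule card_Un_Int[OF f1 f2])
  have un: "(J \<inter> X) \<union> (J \<inter> Y) = J" using J(2) by blast
  have f3: "finite ((J \<inter> X) \<inter> (J \<inter> Y))" using fJ by blast
  have ci: "card I \<le> card ((J \<inter> X) \<inter> (J \<inter> Y))"
    by (rule card_mono[OF f3]) (use I(1) J(1) in blast)
  show ?thesis using cu ci a b I(3) J(4) unfolding un by linarith
qed

lemma rk_single: "rk indep {x} \<le> 1"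
proof -
  obtain I where I: "I \<subseteq> {x}" "card I = rk indep {x}" using rk_basis by blast
  have "card I \<le> card {x}" by (rule card_mono[OF _ I(1)]) simp
  then show ?thesis using I(2) by simp
qed

lemma rk_insert_le: "rk indep (insert x X) \<le> rk indep X + rk indep {x}"
proof -
  have h: "rk indep (X \<union> {x}) + rk indep (X \<inter> {x}) \<le> rk indep X + rk indep {x}" by (rule rk_submod)
  have eq: "X \<union> {x} = insert x X" by blast
  show ?thesis using h unfolding eq by linarith
qed

lemma lam_eq: "Z \<subseteq> E \<Longrightarrow> lam E indep Z + rk indep E = rk indep Z + rk indep (E - Z)"
proof -
  assume Z: "Z \<subseteq> E"
  have u: "Z \<union> (E - Z) = E" using Z by blast
  have "rk indep (Z \<union> (E - Z)) + rk indep (Z \<inter> (E - Z)) \<le> rk indep Z + rk indep (E - Z)"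
    by (rule rk_submod)
  then have "rk indep E \<le> rk indep Z + rk indep (E - Z)" unfolding u by linarith
  then show ?thesis unfolding lam_def by (rule le_add_diff_inverse2)
qed

lemma rk_contract:
  assumes X: "X \<subseteq> E - {e}" and eE: "e \<in> E"
  shows "rk (contract indep e) X = rk indep (insert e X) - rk indep {e}"
proof (cases "indep {e}")
  case True
  have r1: "rk indep {e} = 1"
    using rk_ge[of "{e}" "{e}"] True rk_single[of e] by simp
  have fin: "finite {card I |I. I \<subseteq> X \<and> contract indep e I}"
  proof (rule finite_subset[of _ "{..card E}"])
    show "{card I |I. I \<subseteq> X \<and> contract indep e I} \<subseteq> {..card E}"
    proof
      fix y assume "y \<in> {card I |I. I \<subseteq> X \<and> contract indep e I}"
      then obtain I where I: "y = card I" "contract indep e I" by blast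
      then have "indep (insert e I)" unfolding contract_def using True by simp
      then have "I \<subseteq> E" using indep_sub by blast
      then have "card I \<le> card E" by (rule card_mono[OF finE])
      then show "y \<in> {..card E}" using I(1) by simp
    qed
  qed simp
  obtain J where J: "{e} \<subseteq> J" "J \<subseteq> insert e X" "indep J" "card J = rk indep (insert e X)"
    using augment[OF True, of "insert e X"] by blast
  have "Max {card I |I. I \<subseteq> X \<and> contract indep e I} = rk indep (insert e X) - 1"
  proof (rule Max_eqI[OF fin])
    fix y assume "y \<in> {card I |I. I \<subseteq> X \<and> contract indep e I}"
    then obtain I where I0: "I \<subseteq> X" "contract indep e I" "y = card I" by blast
    then have I: "e \<notin> I" "indep (insert e I)" unfolding contract_def using True by simp_all
    have "finite I" using indep_fin[OF I(2)] by simp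
    then have "card (insert e I) = y + 1" using I I0 by simp
    moreover have "card (insert e I) \<le> rk indep (insert e X)"
      by (rule rk_ge[OF _ I(2)]) (use I0 in blast)
    ultimately show "y \<le> rk indep (insert e X) - 1" by simp
  next
    have j1: "J - {e} \<subseteq> X" using J X by blast
    have j2: "contract indep e (J - {e})"
    proof -
      have "insert e (J - {e}) = J" using J by blast
      then show ?thesis unfolding contract_def using True J by simp
    qed
    have j3: "card (J - {e}) = rk indep (insert e X) - 1" using J by simp
    show "rk indep (insert e X) - 1 \<in> {card I |I. I \<subseteq> X \<and> contract indep e I}"
    proof (rule CollectI, rule exI[of _ "J - {e}"], intro conjI)
      show "rk indep (insert e X) - 1 = card (J - {e})" using j3 by (rule sym)
    qed (rule j1, rule j2)
  qed
  then have "rk (contract indep e) X = rk indep (insert e X) - 1"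
    unfolding rk_def[of "contract indep e"] .
  then show ?thesis using r1 by simp
next
  case False
  have loop: "indep I \<Longrightarrow> e \<notin> I" for I
  proof
    assume "indep I" "e \<in> I"
    then have "indep {e}" using indep_subset[of I "{e}"] by simp
    then show False using False by simp
  qed
  have c: "contract indep e = indep"
  proof
    fix I
    show "contract indep e I = indep I"
    proof
      assume "contract indep e I"
      then show "indep I" unfolding contract_def if_not_P[OF False] by blast
    next
      assume h: "indep I"
      then have "e \<notin> I" by (rule loop)
      then show "contract indep e I" unfolding contract_def if_not_P[OF False] using h by blast
    qed
  qed
  have r0: "rk indep {e} = 0"
  proof -
    obtain I where I: "I \<subseteq> {e}" "indep I" "card I = rk indep {e}" using rk_basis by blast
    have "e \<notin> I" using loop[OF I(2)] .
    then have "I = {}" using I(1) by blast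
    then show ?thesis using I(3) by simp
  qed
  have eq: "{card I |I. I \<subseteq> insert e X \<and> indep I} = {card I |I. I \<subseteq> X \<and> indep I}"
  proof (rule Collect_cong)
    fix y
    show "(\<exists>I. y = card I \<and> I \<subseteq> insert e X \<and> indep I) = (\<exists>I. y = card I \<and> I \<subseteq> X \<and> indep I)"
      using loop by blast
  qed
  have r2: "rk indep (insert e X) = rk indep X" unfolding rk_def eq ..
  have "rk (contract indep e) X = rk indep X" unfolding c ..
  then show ?thesis using r2 r0 by simp
qed

lemma lam_contract:
  assumes X: "X \<subseteq> E - {e}" and eE: "e \<in> E"
  shows "lam (E - {e}) (contract indep e) X + rk indep E + rk indep {e}
         = rk indep (insert e X) + rk indep (insert e (E - {e} - X))"
proof -
  let ?Y = "E - {e} - X"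
  have r1: "rk (contract indep e) X = rk indep (insert e X) - rk indep {e}" by (rule rk_contract[OF X eE])
  have r2: "rk (contract indep e) ?Y = rk indep (insert e ?Y) - rk indep {e}" by (rule rk_contract) (use eE in auto)
  have r3: "rk (contract indep e) (E - {e}) = rk indep (insert e (E - {e})) - rk indep {e}" by (rule rk_contract) (use eE in auto)
  have iE: "insert e (E - {e}) = E" using eE by blast
  have m1: "rk indep {e} \<le> rk indep (insert e X)" by (rule rk_mono) auto
  have m2: "rk indep {e} \<le> rk indep (insert e ?Y)" by (rule rk_mono) auto
  have m3: "rk indep {e} \<le> rk indep E" by (rule rk_mono) (use eE in auto)
  have u: "insert e X \<union> insert e ?Y = E" using X eE by blast
  have i: "insert e X \<inter> insert e ?Y = {e}" by blast
  have s: "rk indep E + rk indep {e} \<le> rk indep (insert e X) + rk indep (insert e ?Y)"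
    using rk_submod[of "insert e X" "insert e ?Y"] unfolding u i .
  have L: "lam (E - {e}) (contract indep e) X = (rk indep (insert e X) - rk indep {e})
     + (rk indep (insert e ?Y) - rk indep {e}) - (rk indep E - rk indep {e})"
    unfolding lam_def r1 r2 r3 iE by (rule refl)
  define a where "a = rk indep (insert e X)"
  define b where "b = rk indep (insert e ?Y)"
  define c where "c = rk indep E"
  define p where "p = rk indep {e}"
  have L': "lam (E - {e}) (contract indep e) X = (a - p) + (b - p) - (c - p)"
    using L unfolding a_def b_def c_def p_def .
  have ha: "a - p + p = a" using m1 unfolding a_def p_def by simp
  have hb: "b - p + p = b" using m2 unfolding b_def p_def by simp
  have hc: "c - p + p = c" using m3 unfolding c_def p_def by simp
  have hs: "c - p \<le> (a - p) + (b - p)" using s ha hb hc unfolding a_def b_def c_def p_def by linarith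
  have "lam (E - {e}) (contract indep e) X + (c - p) = (a - p) + (b - p)" using L' hs by simp
  then show ?thesis using ha hb hc unfolding a_def b_def c_def p_def by linarith
qed

end

theorem lemma3p5:
  fixes E :: "'a set" and indep :: "'a set \<Rightarrow> bool"
    and S T A B :: "'a set" and e :: 'a
  assumes M: "matroid E indep"
    and ST: "S \<subseteq> E" "T \<subseteq> E" "S \<inter> T = {}"
    and e: "e \<in> E - (S \<union> T)"
    and ne: "kappa (E - {e}) (contract indep e) S T \<noteq> kappa E indep S T"
    and part: "A \<union> B = E" "A \<inter> B = {}"
    and SA: "S \<subseteq> A" and TB: "T \<subseteq> B"
    and lamA: "lam E indep A = kappa E indep S T"
    and eA: "e \<in> A"
    and minA: "\<And>A' B'. A' \<union> B' = E \<Longrightarrow> A' \<inter> B' = {} \<Longrightarrow> S \<subseteq> A' \<Longrightarrow> T \<subseteq> B' \<Longrightarrow>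
                  lam E indep A' = kappa E indep S T \<Longrightarrow> e \<in> A' \<Longrightarrow> card A \<le> card A'"
  shows "e \<in> cl E indep (A - {e}) \<inter> cl E indep B"
proof -
  interpret m: mat E indep by (rule mat.intro[OF M])
  define k where "k = kappa E indep S T"
  define r where "r = rk indep"
  have finE: "finite E" by (rule m.finE)
  have eE: "e \<in> E" and eS: "e \<notin> S" and eT: "e \<notin> T" using e by auto
  have AE: "A \<subseteq> E" using part by blast
  have BA: "B = E - A" using part by blast
  have eB: "e \<notin> B" using eA part by blast
  have feas: "\<And>X. S \<subseteq> X \<Longrightarrow> X \<subseteq> E - T \<Longrightarrow> k \<le> lam E indep X"
    unfolding k_def by (rule kappa_le[OF finE])
  define \<rho> where "\<rho> = r {e}"
  have rho1: "\<rho> \<le> 1" unfolding \<rho>_def r_def by (rule m.rk_single)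
  define kc where "kc = kappa (E - {e}) (contract indep e) S T"
  have finE': "finite (E - {e})" using finE by simp
  have AT: "A \<inter> T = {}" using part TB by blast
  have kc_le: "kc \<le> lam (E - {e}) (contract indep e) (A - {e})"
    unfolding kc_def by (rule kappa_le[OF finE']) (use SA eS AE AT in auto)
  have lc: "lam (E - {e}) (contract indep e) (A - {e}) + r E + \<rho> = r A + r (insert e B)"
  proof -
    have q1: "insert e (A - {e}) = A" using eA by blast
    have q2: "insert e (E - {e} - (A - {e})) = insert e B" using part eB by blast
    have h: "lam (E - {e}) (contract indep e) (A - {e}) + rk indep E + rk indep {e}
         = rk indep (insert e (A - {e})) + rk indep (insert e (E - {e} - (A - {e})))"
      by (rule m.lam_contract) (use AE eE in auto)
    show ?thesis using h unfolding r_def \<rho>_def by (simp only: q1 q2)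
  qed
  have rB: "r (insert e B) \<le> r B + \<rho>" unfolding r_def \<rho>_def by (rule m.rk_insert_le)
  have lA: "lam E indep A + r E = r A + r B" using m.lam_eq[OF AE] BA unfolding r_def by simp
  have "kc \<le> k" using kc_le lc rB lA lamA k_def by linarith
  then have kc_lt: "kc < k" using ne kc_def k_def by simp
  obtain X0 where X0: "S \<subseteq> X0" "X0 \<subseteq> E - {e} - T" "lam (E - {e}) (contract indep e) X0 = kc"
  proof -
    have "S \<subseteq> E - {e} - T" using ST eS by blast
    from kappa_attained[OF finE' this, of "contract indep e", folded kc_def]
    obtain X where "S \<subseteq> X" "X \<subseteq> E - {e} - T" "lam (E - {e}) (contract indep e) X = kc"
      by blast
    then show ?thesis by (rule that)
  qed
  define Y0 where "Y0 = E - {e} - X0"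
  have lc0: "lam (E - {e}) (contract indep e) X0 + r E + \<rho> = r (insert e X0) + r (insert e Y0)"
    unfolding r_def \<rho>_def Y0_def by (rule m.lam_contract) (use X0 eE in auto)
  define X' where "X' = insert e X0"
  have X'E: "X' \<subseteq> E" using X0 eE X'_def by blast
  have fX': "k \<le> lam E indep X'" by (rule feas) (use X0 X'_def eT eE in auto)
  have EX': "E - X' = Y0" unfolding X'_def Y0_def by blast
  have lX': "lam E indep X' + r E = r X' + r Y0" using m.lam_eq[OF X'E] EX' unfolding r_def by simp
  have rY1: "r Y0 \<le> r (insert e Y0)" unfolding r_def by (rule m.rk_mono) auto
  have rY2: "r (insert e Y0) \<le> r Y0 + \<rho>" unfolding r_def \<rho>_def by (rule m.rk_insert_le)
  have rX': "r X' = r (insert e X0)" using X'_def by simp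
  have rY: "r (insert e Y0) = r Y0"
    using lc0 X0(3) kc_lt fX' lX' rY1 rY2 rho1 rX' by linarith
  have lamX': "lam E indep X' = k"
    using lc0 X0(3) kc_lt fX' lX' rY1 rY2 rho1 rX' by linarith
  \<comment> \<open>submodularity of lambda\<close>
  have AIE: "A \<inter> X' \<subseteq> E" and AUE: "A \<union> X' \<subseteq> E" using AE X'E by auto
  have l1: "lam E indep (A \<inter> X') + r E = r (A \<inter> X') + r (E - (A \<inter> X'))"
    using m.lam_eq[OF AIE] unfolding r_def by simp
  have l2: "lam E indep (A \<union> X') + r E = r (A \<union> X') + r (E - (A \<union> X'))"
    using m.lam_eq[OF AUE] unfolding r_def by simp
  have l3: "lam E indep A + r E = r A + r (E - A)" using m.lam_eq[OF AE] unfolding r_def by simp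
  have l4: "lam E indep X' + r E = r X' + r (E - X')" using m.lam_eq[OF X'E] unfolding r_def by simp
  have s1: "r (A \<union> X') + r (A \<inter> X') \<le> r A + r X'" unfolding r_def by (rule m.rk_submod)
  have s2: "r (E - (A \<inter> X')) + r (E - (A \<union> X')) \<le> r (E - A) + r (E - X')"
  proof -
    have "(E - A) \<union> (E - X') = E - (A \<inter> X')" "(E - A) \<inter> (E - X') = E - (A \<union> X')" by blast+
    then show ?thesis using m.rk_submod[of "E - A" "E - X'"] unfolding r_def by simp
  qed
  have f1: "k \<le> lam E indep (A \<inter> X')" by (rule feas) (use SA X0 X'_def AE AT in auto)
  have f2: "k \<le> lam E indep (A \<union> X')" by (rule feas) (use SA X0 X'_def AE AT eT eE in auto)
  have lAI: "lam E indep (A \<inter> X') = k"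
    using l1 l2 l3 l4 s1 s2 f1 f2 lamA lamX' k_def by linarith
  have "card A \<le> card (A \<inter> X')"
    by (rule minA[of "A \<inter> X'" "E - (A \<inter> X')"])
      (use AE SA X0 X'_def TB part lAI k_def eA in auto)
  moreover have fA: "finite A" using finite_subset[OF AE finE] .
  ultimately have "A \<inter> X' = A"
    by (intro card_seteq[OF fA]) auto
  then have Y0B: "Y0 \<subseteq> B" using EX' BA by blast
  have clB: "r (insert e B) = r B"
  proof -
    have "B \<union> insert e Y0 = insert e B" "B \<inter> insert e Y0 = Y0" using Y0B eB by blast+
    then have "r (insert e B) + r Y0 \<le> r B + r (insert e Y0)"
      using m.rk_submod[of B "insert e Y0"] unfolding r_def by simp
    moreover have "r B \<le> r (insert e B)" unfolding r_def by (rule m.rk_mono) auto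
    ultimately show ?thesis using rY by linarith
  qed
  have clA: "r A = r (A - {e})"
  proof -
    have Ae: "A - {e} \<subseteq> E" using AE by blast
    have "E - (A - {e}) = insert e B" using part eA eE by blast
    then have "lam E indep (A - {e}) + r E = r (A - {e}) + r (insert e B)"
      using m.lam_eq[OF Ae] unfolding r_def by simp
    moreover have "k \<le> lam E indep (A - {e})" by (rule feas) (use SA eS AE AT in auto)
    moreover have "r (A - {e}) \<le> r A" unfolding r_def by (rule m.rk_mono) auto
    ultimately show ?thesis using clB lA lamA k_def by linarith
  qed
  have iA: "insert e (A - {e}) = A" using eA by blast
  have clA': "rk indep A = rk indep (A - {e})" using clA unfolding r_def .
  have clB': "rk indep (insert e B) = rk indep B" using clB unfolding r_def .
  have c1: "e \<in> cl E indep (A - {e})" unfolding cl_def mem_Collect_eq iA using eE clA' by blast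
  have c2: "e \<in> cl E indep B" unfolding cl_def mem_Collect_eq using eE clB' by blast
  show ?thesis using c1 c2 by blast
qed

end
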